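(* For all $n \geq m \geq 1$, the image of the Haar probability measure on $U(n)$ under the map $\pi_{n,m}: U(n)\to U(m)$ is the Haar probability measure on $U(m)$.
   Context: Let $(e_k)$ be the canonical basis of $\ell^2$; identify $\mathbb{C}^n$ with the span of $e_1,\dots,e_n$ and $U(n)$ with the unitary operators fixing every $e_k$, $k>n$. For $n\ge m\ge1$ and $u\in U(n)$, $\pi_{n,m}(u)$ is the unique $v\in U(m)$ such that the range of $u-v$ is contained in $(u-\mathrm{Id})(\mathrm{span}\{e_k:k>m\})$ (existence and uniqueness are known; $\pi_{n,m}$ is Borel measurable). *)

theory Defs
  imports "HOL-Analysis.Analysis" "HOL-Probability.Probability"
begin

text \<open>Operators on l2 fixing all but finitely many basis vectors are represented by their
  matrices A :: nat => nat => complex w.r.t. the canonical basis; index k (0-based) stands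
  for the basis vector e_(k+1). Thus C^n is the span of the indices 0..n-1.\<close>

type_synonym cmatrix = "nat \<Rightarrow> nat \<Rightarrow> complex"

definition idm :: cmatrix where
  "idm = (\<lambda>i j. if i = j then 1 else 0)"

text \<open>U(n): unitary operators fixing every e_k with k > n.\<close>
definition Unitary :: "nat \<Rightarrow> cmatrix set" where
  "Unitary n = {A. (\<forall>i j. (n \<le> i \<or> n \<le> j) \<longrightarrow> A i j = idm i j) \<and>
              (\<forall>i<n. \<forall>j<n. (\<Sum>k<n. cnj (A k i) * A k j) = idm i j)}"

definition mapply :: "nat \<Rightarrow> cmatrix \<Rightarrow> (nat \<Rightarrow> complex) \<Rightarrow> (nat \<Rightarrow> complex)" where
  "mapply n A x = (\<lambda>i. \<Sum>j<n. A i j * x j)"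

definition mmul :: "nat \<Rightarrow> cmatrix \<Rightarrow> cmatrix \<Rightarrow> cmatrix" where
  "mmul n A B = (\<lambda>i j. if i < n \<and> j < n then (\<Sum>k<n. A i k * B k j) else idm i j)"

definition Un_borel :: "nat \<Rightarrow> cmatrix measure" where
  "Un_borel n = restrict_space borel (Unitary n)"

definition is_haar :: "nat \<Rightarrow> cmatrix measure \<Rightarrow> bool" where
  "is_haar n \<mu> \<longleftrightarrow> sets \<mu> = sets (Un_borel n) \<and> prob_space \<mu> \<and>
     (\<forall>g\<in>Unitary n. distr \<mu> (Un_borel n) (mmul n g) = \<mu>)"

text \<open>pi_{n,m}(u): the unique v in U(m) such that range(u - v) is contained in
  (u - Id)(span{e_k : k > m}). For u in U(n), v in U(m), m <= n, the operator u - v vanishes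
  on e_k for k > n, so its range is the set of mapply n (u - v) x; likewise u - Id kills e_k,
  k > n, so (u - Id) y only depends on the components of y below n.\<close>
definition pi_nm :: "nat \<Rightarrow> nat \<Rightarrow> cmatrix \<Rightarrow> cmatrix" where
  "pi_nm n m u = (THE v. v \<in> Unitary m \<and>
      (\<forall>x. \<exists>y. (\<forall>j<m. y j = 0) \<and> mapply n (u - v) x = mapply n (u - idm) y))"

end

theory Submission
  imports Defs
begin


definition cond :: "nat \<Rightarrow> nat \<Rightarrow> cmatrix \<Rightarrow> cmatrix \<Rightarrow> bool" where
  "cond n m u v \<longleftrightarrow> (\<forall>x. \<exists>y. (\<forall>j<m. y j = 0) \<and> mapply n (u - v) x = mapply n (u - idm) y)"

lemma UnitaryD_out: "A \<in> Unitary n \<Longrightarrow> n \<le> i \<or> n \<le> j \<Longrightarrow> A i j = idm i j"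
  by (auto simp: Unitary_def)

lemma UnitaryD_orth: "A \<in> Unitary n \<Longrightarrow> i < n \<Longrightarrow> j < n \<Longrightarrow> (\<Sum>k<n. cnj (A k i) * A k j) = idm i j"
  by (simp add: Unitary_def)

lemma sum_idm_left: assumes "i < n" shows "(\<Sum>k<n. idm i k * f k) = (f i :: complex)"
proof -
  have "(\<Sum>k<n. idm i k * f k) = (\<Sum>k<n. if k = i then f k else 0)"
    by (intro sum.cong refl) (auto simp: idm_def)
  thus ?thesis using assms by simp
qed

lemma sum_idm_right: assumes "i < n" shows "(\<Sum>k<n. f k * idm k i) = (f i :: complex)"
proof -
  have "(\<Sum>k<n. f k * idm k i) = (\<Sum>k<n. if k = i then f k else 0)"
    by (intro sum.cong refl) (auto simp: idm_def)
  thus ?thesis using assms by simp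
qed

lemma sum_cnj_idm: assumes "i < n" shows "(\<Sum>k<n. cnj (idm k i) * f k) = (f i :: complex)"
proof -
  have "(\<Sum>k<n. cnj (idm k i) * f k) = (\<Sum>k<n. if k = i then f k else 0)"
    by (intro sum.cong refl) (auto simp: idm_def)
  thus ?thesis using assms by simp
qed

lemma Unitary_mono:
  assumes "m \<le> n" "A \<in> Unitary m" shows "A \<in> Unitary n"
  unfolding Unitary_def
proof (intro CollectI conjI allI impI)
  fix i j assume "n \<le> i \<or> n \<le> j" thus "A i j = idm i j" using assms by (auto intro: UnitaryD_out)
next
  fix i j assume ij: "i < n" "j < n"
  show "(\<Sum>k<n. cnj (A k i) * A k j) = idm i j"
  proof (cases "m \<le> i")
    case True
    hence "(\<Sum>k<n. cnj (A k i) * A k j) = (\<Sum>k<n. cnj (idm k i) * A k j)"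
      using assms(2) by (intro sum.cong) (auto simp: UnitaryD_out)
    also have "\<dots> = A i j" using ij by (simp add: sum_cnj_idm)
    also have "\<dots> = idm i j" using True assms(2) by (simp add: UnitaryD_out)
    finally show ?thesis .
  next
    case F1: False
    show ?thesis
    proof (cases "m \<le> j")
      case True
      hence "(\<Sum>k<n. cnj (A k i) * A k j) = (\<Sum>k<n. cnj (A k i) * idm k j)"
        using assms(2) by (intro sum.cong) (auto simp: UnitaryD_out)
      also have "\<dots> = cnj (A j i)" using ij by (simp add: sum_idm_right)
      also have "\<dots> = idm i j" using True assms(2) by (simp add: UnitaryD_out idm_def)
      finally show ?thesis .
    next
      case False
      have sp: "{..<n} = {..<m} \<union> {m..<n}" using assms(1) by auto
      have "(\<Sum>k<n. cnj (A k i) * A k j) = (\<Sum>k<m. cnj (A k i) * A k j) + (\<Sum>k\<in>{m..<n}. cnj (A k i) * A k j)"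
        unfolding sp by (subst sum.union_disjoint) auto
      also have "(\<Sum>k\<in>{m..<n}. cnj (A k i) * A k j) = 0"
        using F1 assms(2) by (intro sum.neutral) (auto simp: UnitaryD_out idm_def)
      finally show ?thesis using F1 False assms(2) by (simp add: UnitaryD_orth)
    qed
  qed
qed

lemma mapply_diff: "mapply n (A - B) x = (\<lambda>i. mapply n A x i - mapply n B x i)"
  by (auto simp: mapply_def algebra_simps sum_subtractf)

lemma mapply_vdiff: "mapply n A (\<lambda>j. x j - y j) = (\<lambda>i. mapply n A x i - mapply n A y i)"
  by (auto simp: mapply_def algebra_simps sum_subtractf)

lemma mapply_vadd: "mapply n A (\<lambda>j. x j + y j) = (\<lambda>i. mapply n A x i + mapply n A y i)"
  by (auto simp: mapply_def algebra_simps sum.distrib)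

lemma mapply_zero: "mapply n A (\<lambda>j. 0) = (\<lambda>i. 0)"
  by (simp add: mapply_def)

lemma unitary_isometry:
  assumes "A \<in> Unitary n"
  shows "(\<Sum>i<n. cnj (\<Sum>j<n. A i j * z j) * (\<Sum>l<n. A i l * z l)) = (\<Sum>j<n. cnj (z j) * z j)"
proof -
  have "(\<Sum>i<n. cnj (\<Sum>j<n. A i j * z j) * (\<Sum>l<n. A i l * z l))
      = (\<Sum>i<n. \<Sum>j<n. \<Sum>l<n. cnj (z j) * z l * (cnj (A i j) * A i l))"
    by (simp add: sum_distrib_left sum_distrib_right mult_ac)
  also have "\<dots> = (\<Sum>j<n. \<Sum>l<n. cnj (z j) * z l * (\<Sum>i<n. cnj (A i j) * A i l))"
  proof -
    have "(\<Sum>i<n. \<Sum>j<n. \<Sum>l<n. cnj (z j) * z l * (cnj (A i j) * A i l))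
        = (\<Sum>j<n. \<Sum>i<n. \<Sum>l<n. cnj (z j) * z l * (cnj (A i j) * A i l))" by (rule sum.swap)
    also have "\<dots> = (\<Sum>j<n. \<Sum>l<n. \<Sum>i<n. cnj (z j) * z l * (cnj (A i j) * A i l))"
      by (rule sum.cong[OF refl], rule sum.swap)
    finally show ?thesis by (simp add: sum_distrib_left)
  qed
  also have "\<dots> = (\<Sum>j<n. \<Sum>l<n. cnj (z j) * (z l * idm j l))"
    using assms apply - apply (rule sum.cong[OF refl]) apply (rule sum.cong[OF refl]) by (simp add: UnitaryD_orth mult.assoc)
  also have "\<dots> = (\<Sum>j<n. cnj (z j) * z j)"
    by (intro sum.cong refl) (simp add: sum_distrib_left[symmetric] idm_def if_distrib cong: if_cong)
  finally show ?thesis .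
qed

lemma mapply_idm: "mapply n idm z i = (if i < n then z i else 0)"
proof (cases "i < n")
  case True thus ?thesis by (simp add: mapply_def sum_idm_left)
next
  case False thus ?thesis by (simp add: mapply_def idm_def)
qed

lemma mapply_unit: assumes "c < n" shows "mapply n A (\<lambda>j. if j = c then 1 else 0) = (\<lambda>i. A i c)"
proof
  fix i
  have "(\<Sum>j<n. A i j * (if j = c then 1 else 0)) = (\<Sum>j<n. if j = c then A i j else 0)"
    by (intro sum.cong refl) auto
  thus "mapply n A (\<lambda>j. if j = c then 1 else 0) i = A i c" using assms by (simp add: mapply_def)
qed

lemma cnj_mult_self_sum_zero:
  fixes w :: "nat \<Rightarrow> complex"
  assumes "(\<Sum>i\<in>S. cnj (w i) * w i) = 0" "finite S" "i \<in> S"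
  shows "w i = 0"
proof -
  have e: "cnj (w i) * w i = complex_of_real ((cmod (w i))\<^sup>2)" for i
    by (subst complex_norm_square) (simp add: mult.commute)
  have "(\<Sum>i\<in>S. cnj (w i) * w i) = complex_of_real (\<Sum>i\<in>S. (cmod (w i))\<^sup>2)"
    unfolding e of_real_sum by simp
  hence "complex_of_real (\<Sum>i\<in>S. (cmod (w i))\<^sup>2) = 0" using assms(1) by metis
  hence "(\<Sum>i\<in>S. (cmod (w i))\<^sup>2) = 0" by (simp only: of_real_eq_0_iff)
  hence "(cmod (w i))\<^sup>2 = 0" using assms(2,3) by (subst (asm) sum_nonneg_eq_0_iff) auto
  thus ?thesis by simp
qed

lemma cond_unique:
  assumes mn: "m \<le> n" and u: "u \<in> Unitary n" and v1: "v1 \<in> Unitary m" and v2: "v2 \<in> Unitary m"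
    and c1: "cond n m u v1" and c2: "cond n m u v2"
  shows "v1 = v2"
proof -
  have col: "v1 i c = v2 i c" if cm: "c < m" and im: "i < m" for i c
  proof -
    define x where "x = (\<lambda>j. if j = c then 1 else (0::complex))"
    obtain y1 where y1: "\<forall>j<m. y1 j = 0" "mapply n (u - v1) x = mapply n (u - idm) y1"
      using c1 unfolding cond_def by blast
    obtain y2 where y2: "\<forall>j<m. y2 j = 0" "mapply n (u - v2) x = mapply n (u - idm) y2"
      using c2 unfolding cond_def by blast
    define z where "z = (\<lambda>j. y1 j - y2 j)"
    have cn: "c < n" using cm mn by simp
    have key: "v2 i c - v1 i c = mapply n (u - idm) z i" for i
    proof -
      have "mapply n (u - idm) z i = mapply n (u - v1) x i - mapply n (u - v2) x i"
        unfolding z_def mapply_vdiff y1(2) y2(2) by simp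
      thus ?thesis unfolding x_def mapply_unit[OF cn] by simp
    qed
    have z0: "z j = 0" if "j < m" for j using y1(1) y2(1) that by (simp add: z_def)
    define w where "w = (\<lambda>i. \<Sum>j<n. u i j * z j)"
    have mz: "mapply n (u - idm) z i = w i - (if i < n then z i else 0)" for i
      unfolding mapply_diff mapply_idm by (simp add: w_def mapply_def)
    have wz: "w i = z i" if "m \<le> i" "i < n" for i
    proof -
      have "v2 i c - v1 i c = 0" using v1 v2 that by (simp add: UnitaryD_out)
      thus ?thesis using key[of i] mz[of i] that by simp
    qed
    have iso: "(\<Sum>i<n. cnj (w i) * w i) = (\<Sum>j<n. cnj (z j) * z j)"
      unfolding w_def by (rule unitary_isometry[OF u])
    have sp: "{..<n} = {..<m} \<union> {m..<n}" using mn by auto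
    have "(\<Sum>i<n. cnj (w i) * w i) = (\<Sum>i<m. cnj (w i) * w i) + (\<Sum>i\<in>{m..<n}. cnj (w i) * w i)"
      unfolding sp by (subst sum.union_disjoint) auto
    also have "(\<Sum>i\<in>{m..<n}. cnj (w i) * w i) = (\<Sum>i\<in>{m..<n}. cnj (z i) * z i)"
      by (intro sum.cong refl) (simp add: wz)
    finally have A: "(\<Sum>i<n. cnj (w i) * w i) = (\<Sum>i<m. cnj (w i) * w i) + (\<Sum>i\<in>{m..<n}. cnj (z i) * z i)" .
    have "(\<Sum>j<n. cnj (z j) * z j) = (\<Sum>i<m. cnj (z i) * z i) + (\<Sum>i\<in>{m..<n}. cnj (z i) * z i)"
      unfolding sp by (subst sum.union_disjoint) auto
    also have "(\<Sum>i<m. cnj (z i) * z i) = 0" by (intro sum.neutral) (simp add: z0)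
    finally have "(\<Sum>i<m. cnj (w i) * w i) = 0" using A iso by simp
    hence "w i = 0" using im by (intro cnj_mult_self_sum_zero[of w "{..<m}"]) auto
    moreover have "z i = 0" using z0 im by simp
    ultimately have "v2 i c - v1 i c = 0" using key[of i] mz[of i] im mn by simp
    thus ?thesis by simp
  qed
  show ?thesis
  proof (intro ext)
    fix i c
    show "v1 i c = v2 i c"
    proof (cases "c < m \<and> i < m")
      case True thus ?thesis using col by blast
    next
      case False thus ?thesis using v1 v2 by (auto simp: UnitaryD_out)
    qed
  qed
qed

lemma alg0: fixes I ca cb p q :: complex assumes "p \<noteq> 0" "q \<noteq> 0"
shows "(I - ca*cb) + (cb/p)*(-ca*(1-p)) + (ca/q)*(-(1-q)*cb) + (ca*cb/(q*p))*(1 - (1-q)*(1-p)) = I"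
  using assms by (simp add: field_simps)
lemma alg1: fixes I ca cb d cd :: complex assumes "1 - d \<noteq> 0" "1 - cd \<noteq> 0"
shows "(I - ca*cb) + (cb/(1-d))*(-ca*d) + (ca/(1-cd))*(-cd*cb) + (ca*cb/((1-cd)*(1-d)))*(1 - cd*d) = I"
  using alg0[OF assms, of I ca cb] by simp

lemma pt_gen: fixes A B A' ca cb s :: complex
 shows "cnj (A + B * ca / s) * (A' + B * cb / s)
       = cnj A * A' + (cb / s) * (cnj A * B) + (cnj ca / cnj s) * (cnj B * A')
         + (cnj ca * cb / (cnj s * s)) * (cnj B * B)"
  by (simp add: divide_inverse algebra_simps)

definition step :: "nat \<Rightarrow> cmatrix \<Rightarrow> cmatrix" where
  "step k u = (\<lambda>i j. if i < k \<and> j < k then u i j + u i k * u k j / (1 - u k k) else idm i j)"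

lemma orth_Suc:
  assumes "u \<in> Unitary (Suc k)" "a \<le> k" "b \<le> k"
  shows "(\<Sum>i<k. cnj (u i a) * u i b) + cnj (u k a) * u k b = idm a b"
  using UnitaryD_orth[OF assms(1), of a b] assms(2,3) by simp

lemma step_d1:
  assumes u: "u \<in> Unitary (Suc k)" and d: "u k k = 1"
  shows "\<And>i. i < k \<Longrightarrow> u i k = 0" and "\<And>j. j < k \<Longrightarrow> u k j = 0"
proof -
  have "(\<Sum>i<k. cnj (u i k) * u i k) = 0" using orth_Suc[OF u, of k k] d by (simp add: idm_def)
  thus b0: "\<And>i. i < k \<Longrightarrow> u i k = 0" by (intro cnj_mult_self_sum_zero[of "\<lambda>i. u i k" "{..<k}"]) auto
  fix j assume j: "j < k"
  have "(\<Sum>i<k. cnj (u i k) * u i j) = 0" by (intro sum.neutral) (simp add: b0)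
  thus "u k j = 0" using orth_Suc[OF u, of k j] d j by (simp add: idm_def)
qed

lemma step_unitary:
  assumes u: "u \<in> Unitary (Suc k)"
  shows "step k u \<in> Unitary k"
  unfolding Unitary_def
proof (intro CollectI conjI allI impI)
  fix i j assume "k \<le> i \<or> k \<le> j" thus "step k u i j = idm i j" by (auto simp: step_def)
next
  fix a b assume ab: "a < k" "b < k"
  define d where "d = u k k"
  define s where "s = 1 - d"
  have V: "step k u i c = u i c + u i k * u k c / s" if "i < k" "c < k" for i c
    using that by (simp add: step_def s_def d_def)
  have "(\<Sum>i<k. cnj (step k u i a) * step k u i b) = (\<Sum>i<k. cnj (u i a + u i k * u k a / s) * (u i b + u i k * u k b / s))"
    by (intro sum.cong refl) (simp add: V ab)
  also have "\<dots> = idm a b"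
  proof (cases "s = 0")
    case True
    hence "d = 1" by (simp add: s_def)
    hence "u k a = 0" using step_d1(2)[OF u] ab by (simp add: d_def)
    thus ?thesis using True orth_Suc[OF u, of a b] ab by simp
  next
    case False
    have cs: "cnj s \<noteq> 0" using False by simp
    have pt: "cnj (u i a + u i k * u k a / s) * (u i b + u i k * u k b / s)
       = cnj (u i a) * u i b + (u k b / s) * (cnj (u i a) * u i k) + (cnj (u k a) / cnj s) * (cnj (u i k) * u i b)
         + (cnj (u k a) * u k b / (cnj s * s)) * (cnj (u i k) * u i k)" for i
      by (rule pt_gen)
    have "(\<Sum>i<k. cnj (u i a + u i k * u k a / s) * (u i b + u i k * u k b / s))
       = (\<Sum>i<k. cnj (u i a) * u i b) + (u k b / s) * (\<Sum>i<k. cnj (u i a) * u i k) + (cnj (u k a) / cnj s) * (\<Sum>i<k. cnj (u i k) * u i b)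
         + (cnj (u k a) * u k b / (cnj s * s)) * (\<Sum>i<k. cnj (u i k) * u i k)"
      unfolding pt by (simp add: sum.distrib sum_distrib_left)
    also have "\<dots> = (idm a b - cnj (u k a) * u k b) + (u k b / s) * (- cnj (u k a) * d) + (cnj (u k a) / cnj s) * (- cnj d * u k b)
         + (cnj (u k a) * u k b / (cnj s * s)) * (1 - cnj d * d)"
    proof -
      have "(\<Sum>i<k. cnj (u i a) * u i b) = idm a b - cnj (u k a) * u k b" using orth_Suc[OF u, of a b] ab by (simp add: algebra_simps)
      moreover have "(\<Sum>i<k. cnj (u i a) * u i k) = - cnj (u k a) * d" using orth_Suc[OF u, of a k] ab by (simp add: algebra_simps idm_def d_def eq_neg_iff_add_eq_0)
      moreover have "(\<Sum>i<k. cnj (u i k) * u i b) = - cnj d * u k b" using orth_Suc[OF u, of k b] ab by (simp add: algebra_simps idm_def d_def eq_neg_iff_add_eq_0)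
      moreover have "(\<Sum>i<k. cnj (u i k) * u i k) = 1 - cnj d * d" using orth_Suc[OF u, of k k] by (simp add: algebra_simps idm_def d_def)
      ultimately show ?thesis by simp
    qed
    also have "\<dots> = idm a b"
      using alg1[of d "cnj d" "idm a b" "cnj (u k a)" "u k b"] False cs unfolding s_def by (simp add: mult_ac)
    finally show ?thesis .
  qed
  finally show "(\<Sum>i<k. cnj (step k u i a) * step k u i b) = idm a b" .
qed

lemma step_cond:
  assumes u: "u \<in> Unitary (Suc k)"
  shows "cond (Suc k) k u (step k u)"
  unfolding cond_def
proof
  fix x
  define d where "d = u k k"
  define s where "s = 1 - d"
  define S where "S = (\<Sum>j<k. u k j * x j)"
  define t where "t = x k - S / s"
  define y where "y = (\<lambda>j. if j = k then t else (0::complex))"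
  have R: "mapply (Suc k) (u - idm) y i = (u i k - idm i k) * t" for i
  proof -
    have "(\<Sum>j<Suc k. (u i j - idm i j) * y j) = (\<Sum>j<Suc k. if j = k then (u i k - idm i k) * t else 0)"
      by (intro sum.cong refl) (auto simp: y_def)
    thus ?thesis by (simp add: mapply_def)
  qed
  have "mapply (Suc k) (u - step k u) x = mapply (Suc k) (u - idm) y"
  proof
    fix i
    have L: "mapply (Suc k) (u - step k u) x i = (\<Sum>j<k. (u i j - step k u i j) * x j) + (u i k - step k u i k) * x k"
      by (simp add: mapply_def)
    consider "i < k" | "i = k" | "k < i" by linarith
    thus "mapply (Suc k) (u - step k u) x i = mapply (Suc k) (u - idm) y i"
    proof cases
      case 1
      have "(\<Sum>j<k. (u i j - step k u i j) * x j) = (\<Sum>j<k. - (u i k * (u k j * x j) / s))"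
        using 1 by (intro sum.cong refl) (simp add: step_def s_def d_def)
      also have "\<dots> = - (u i k * S / s)"
        by (simp add: S_def sum_negf sum_divide_distrib[symmetric] sum_distrib_left[symmetric])
      finally show ?thesis unfolding L R using 1
        by (simp add: step_def idm_def t_def algebra_simps)
    next
      case 2
      have st: "step k u k j = idm k j" for j by (simp add: step_def)
      have "(\<Sum>j<k. (u i j - step k u i j) * x j) = S"
        unfolding S_def using 2 by (intro sum.cong refl) (simp add: st idm_def)
      hence L2: "mapply (Suc k) (u - step k u) x i = S + (d - 1) * x k"
        using L 2 by (simp add: st idm_def d_def)
      show ?thesis
      proof (cases "s = 0")
        case True
        hence d1: "u k k = 1" by (simp add: s_def d_def)
        have "S = 0" unfolding S_def by (intro sum.neutral) (simp add: step_d1(2)[OF u d1])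
        thus ?thesis unfolding L2 R using 2 True by (simp add: s_def d_def idm_def)
      next
        case False
        thus ?thesis unfolding L2 R using 2 by (simp add: t_def d_def idm_def s_def field_simps)
      qed
    next
      case 3
      have "u i j = idm i j" for j using u 3 by (simp add: UnitaryD_out)
      moreover have "step k u i j = idm i j" for j using 3 by (simp add: step_def)
      ultimately show ?thesis unfolding mapply_def by simp
    qed
  qed
  thus "\<exists>y. (\<forall>j<k. y j = 0) \<and> mapply (Suc k) (u - step k u) x = mapply (Suc k) (u - idm) y"
    by (intro exI[of _ y]) (simp add: y_def)
qed



lemma mapply_cong: "(\<And>j. j < n \<Longrightarrow> x j = x' j) \<Longrightarrow> mapply n A x = mapply n A x'"
  unfolding mapply_def by (intro ext sum.cong refl) simp

lemma mapply_shrink: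
  assumes "k \<le> n" "\<And>i j. k \<le> j \<Longrightarrow> j < n \<Longrightarrow> A i j = 0"
  shows "mapply n A x = mapply k A x"
proof
  fix i
  have sp: "{..<n} = {..<k} \<union> {k..<n}" using assms(1) by auto
  have "(\<Sum>j<n. A i j * x j) = (\<Sum>j<k. A i j * x j) + (\<Sum>j\<in>{k..<n}. A i j * x j)"
    unfolding sp by (subst sum.union_disjoint) auto
  also have "(\<Sum>j\<in>{k..<n}. A i j * x j) = 0" using assms(2) by (intro sum.neutral) auto
  finally show "mapply n A x i = mapply k A x i" by (simp add: mapply_def)
qed

lemma cond_refl: "cond n m u u"
  unfolding cond_def
proof
  fix x
  show "\<exists>y. (\<forall>j<m. y j = 0) \<and> mapply n (u - u) x = mapply n (u - idm) y"
    by (intro exI[of _ "\<lambda>j. 0"]) (simp add: mapply_def)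
qed

lemma cond_trans:
  assumes mk: "m \<le> k" and kn: "k \<le> n" and u: "u \<in> Unitary n" and v: "v \<in> Unitary k" and w: "w \<in> Unitary m"
    and c1: "cond n k u v" and c2: "cond k m v w"
  shows "cond n m u w"
  unfolding cond_def
proof
  fix x
  obtain y1 where y1: "\<forall>j<k. y1 j = 0" "mapply n (u - v) x = mapply n (u - idm) y1"
    using c1 unfolding cond_def by blast
  obtain y2 where y2: "\<forall>j<m. y2 j = 0" "mapply k (v - w) x = mapply k (v - idm) y2"
    using c2 unfolding cond_def by blast
  obtain y3 where y3: "\<forall>j<k. y3 j = 0" "mapply n (u - v) y2 = mapply n (u - idm) y3"
    using c1 unfolding cond_def by blast
  have s1: "mapply n (v - w) x = mapply k (v - w) x"
    by (rule mapply_shrink[OF kn]) (use v w mk in \<open>simp add: UnitaryD_out\<close>)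
  have s2: "mapply n (v - idm) y2 = mapply k (v - idm) y2"
    by (rule mapply_shrink[OF kn]) (use v in \<open>simp add: UnitaryD_out\<close>)
  define y where "y = (\<lambda>j. y1 j + y2 j - y3 j)"
  have "mapply n (u - w) x = mapply n (u - idm) y"
  proof
    fix i
    have a: "mapply n (u - w) x i = mapply n (u - v) x i + mapply n (v - w) x i"
      by (simp add: mapply_def algebra_simps sum.distrib[symmetric])
    have b: "mapply n (v - idm) y2 i = mapply n (u - idm) y2 i - mapply n (u - v) y2 i"
      by (simp add: mapply_def algebra_simps sum_subtractf[symmetric])
    have c: "mapply n (u - idm) y i = mapply n (u - idm) y1 i + mapply n (u - idm) y2 i - mapply n (u - idm) y3 i"
      unfolding y_def by (simp add: mapply_def algebra_simps sum.distrib sum_subtractf)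
    show "mapply n (u - w) x i = mapply n (u - idm) y i"
      unfolding a c s1 y2(2) s2[symmetric] b y1(2) y3(2) by simp
  qed
  moreover have "\<forall>j<m. y j = 0" using y1(1) y2(1) y3(1) mk by (simp add: y_def)
  ultimately show "\<exists>y. (\<forall>j<m. y j = 0) \<and> mapply n (u - w) x = mapply n (u - idm) y" by blast
qed

lemma cond_exists: "u \<in> Unitary (m + d) \<Longrightarrow> \<exists>v\<in>Unitary m. cond (m + d) m u v"
proof (induction d arbitrary: u)
  case 0 thus ?case using cond_refl by auto
next
  case (Suc d)
  have su: "step (m + d) u \<in> Unitary (m + d)" using Suc.prems step_unitary by simp
  obtain w where w: "w \<in> Unitary m" "cond (m + d) m (step (m + d) u) w" using Suc.IH[OF su] by blast
  have "cond (Suc (m + d)) m u w"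
    by (rule cond_trans[OF _ _ _ su w(1) _ w(2)]) (use Suc.prems step_cond in auto)
  thus ?case using w(1) by auto
qed

lemma pi_nm_prop:
  assumes "m \<le> n" "u \<in> Unitary n"
  shows "pi_nm n m u \<in> Unitary m \<and> cond n m u (pi_nm n m u)"
proof -
  obtain d where n: "n = m + d" using assms(1) le_Suc_ex by blast
  have ex: "\<exists>!v. v \<in> Unitary m \<and> cond n m u v"
    using cond_exists[of u m d] cond_unique[OF assms(1,2)] assms n by blast
  show ?thesis unfolding pi_nm_def cond_def[symmetric] by (rule theI'[OF ex])
qed

lemma pi_nm_eq:
  assumes "m \<le> n" "u \<in> Unitary n" "v \<in> Unitary m" "cond n m u v"
  shows "pi_nm n m u = v"
  using cond_unique[OF assms(1,2) _ assms(3) _ assms(4)] pi_nm_prop[OF assms(1,2)] by blast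

lemma pi_nm_refl: "u \<in> Unitary n \<Longrightarrow> pi_nm n n u = u"
  by (rule pi_nm_eq) (auto simp: cond_refl)

lemma pi_nm_Suc:
  assumes "m \<le> k" "u \<in> Unitary (Suc k)"
  shows "pi_nm (Suc k) m u = pi_nm k m (step k u)"
proof -
  have su: "step k u \<in> Unitary k" using assms step_unitary by simp
  note p = pi_nm_prop[OF assms(1) su]
  show ?thesis
    by (rule pi_nm_eq) (use assms p su step_cond in \<open>auto intro: cond_trans[OF assms(1) _ assms(2) su]\<close>)
qed

lemma coord_meas[measurable]: "(\<lambda>u::cmatrix. u i j) \<in> borel_measurable borel"
proof -
  have "(\<lambda>v::nat\<Rightarrow>complex. v j) \<circ> (\<lambda>u::cmatrix. u i) \<in> borel_measurable borel"
    by (rule measurable_comp[OF measurable_product_coordinates measurable_product_coordinates])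
  thus ?thesis by (simp add: comp_def)
qed

lemma matrix_meas:
  fixes f :: "'a \<Rightarrow> cmatrix"
  assumes "\<And>i j. (\<lambda>x. f x i j) \<in> borel_measurable M"
  shows "f \<in> borel_measurable M"
  by (rule measurable_coordinatewise_then_product, rule measurable_coordinatewise_then_product) (rule assms)

lemma step_meas: "step k \<in> measurable (Un_borel (Suc k)) (Un_borel k)"
  unfolding Un_borel_def
proof (rule measurable_restrict_space2)
  show "step k \<in> space (restrict_space borel (Unitary (Suc k))) \<rightarrow> Unitary k"
    by (auto simp: space_restrict_space step_unitary)
  show "step k \<in> borel_measurable (restrict_space borel (Unitary (Suc k)))"
    by (rule measurable_restrict_space1, rule matrix_meas) (simp add: step_def)
qed

lemma pi_nm_meas: "pi_nm (m + d) m \<in> measurable (Un_borel (m + d)) (Un_borel m)"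
proof (induction d)
  case 0
  have "pi_nm m m \<in> measurable (Un_borel m) (Un_borel m) \<longleftrightarrow> (\<lambda>x. x) \<in> measurable (Un_borel m) (Un_borel m)"
    by (rule measurable_cong) (simp add: Un_borel_def space_restrict_space pi_nm_refl)
  thus ?case by simp
next
  case (Suc d)
  have "pi_nm (Suc (m + d)) m \<in> measurable (Un_borel (Suc (m + d))) (Un_borel m)
      \<longleftrightarrow> pi_nm (m + d) m \<circ> step (m + d) \<in> measurable (Un_borel (Suc (m + d))) (Un_borel m)"
    by (rule measurable_cong) (simp add: Un_borel_def space_restrict_space pi_nm_Suc)
  moreover have "pi_nm (m + d) m \<circ> step (m + d) \<in> measurable (Un_borel (Suc (m + d))) (Un_borel m)"
    by (rule measurable_comp[OF step_meas Suc.IH])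
  ultimately show ?case by simp
qed

lemma idm_sym: "idm i j = idm j i" by (auto simp: idm_def)

lemma sum_idm_right2: assumes "i < n" shows "(\<Sum>k<n. f k * idm i k) = (f i :: complex)"
  using sum_idm_right[OF assms, of f] by (simp add: idm_sym)

lemma unitary_inner:
  assumes "A \<in> Unitary n"
  shows "(\<Sum>i<n. cnj (\<Sum>j<n. A i j * z j) * (\<Sum>l<n. A i l * w l)) = (\<Sum>j<n. cnj (z j) * w j)"
proof -
  have "(\<Sum>i<n. cnj (\<Sum>j<n. A i j * z j) * (\<Sum>l<n. A i l * w l))
      = (\<Sum>i<n. \<Sum>j<n. \<Sum>l<n. cnj (z j) * w l * (cnj (A i j) * A i l))"
    by (simp add: sum_distrib_left sum_distrib_right mult_ac)
  also have "\<dots> = (\<Sum>j<n. \<Sum>l<n. cnj (z j) * w l * (\<Sum>i<n. cnj (A i j) * A i l))"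
  proof -
    have "(\<Sum>i<n. \<Sum>j<n. \<Sum>l<n. cnj (z j) * w l * (cnj (A i j) * A i l))
        = (\<Sum>j<n. \<Sum>i<n. \<Sum>l<n. cnj (z j) * w l * (cnj (A i j) * A i l))" by (rule sum.swap)
    also have "\<dots> = (\<Sum>j<n. \<Sum>l<n. \<Sum>i<n. cnj (z j) * w l * (cnj (A i j) * A i l))"
      by (rule sum.cong[OF refl], rule sum.swap)
    finally show ?thesis by (simp add: sum_distrib_left)
  qed
  also have "\<dots> = (\<Sum>j<n. \<Sum>l<n. cnj (z j) * (w l * idm j l))"
    using assms apply - apply (rule sum.cong[OF refl]) apply (rule sum.cong[OF refl]) by (simp add: UnitaryD_orth mult.assoc)
  also have "\<dots> = (\<Sum>j<n. cnj (z j) * w j)"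
    by (intro sum.cong refl) (simp add: sum_distrib_left[symmetric] sum_idm_right2)
  finally show ?thesis .
qed

lemma mmul_unitary:
  assumes A: "A \<in> Unitary n" and B: "B \<in> Unitary n"
  shows "mmul n A B \<in> Unitary n"
  unfolding Unitary_def
proof (intro CollectI conjI allI impI)
  fix i j assume "n \<le> i \<or> n \<le> j" thus "mmul n A B i j = idm i j" by (auto simp: mmul_def)
next
  fix a b assume ab: "a < n" "b < n"
  have "(\<Sum>k<n. cnj (mmul n A B k a) * mmul n A B k b) = (\<Sum>k<n. cnj (\<Sum>l<n. A k l * B l a) * (\<Sum>l<n. A k l * B l b))"
    using ab by (intro sum.cong refl) (simp add: mmul_def)
  also have "\<dots> = (\<Sum>j<n. cnj (B j a) * B j b)" by (rule unitary_inner[OF A])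
  also have "\<dots> = idm a b" using B ab by (rule UnitaryD_orth)
  finally show "(\<Sum>k<n. cnj (mmul n A B k a) * mmul n A B k b) = idm a b" .
qed

lemma mmul_meas:
  assumes g: "g \<in> Unitary m"
  shows "mmul m g \<in> measurable (Un_borel m) (Un_borel m)"
  unfolding Un_borel_def
proof (rule measurable_restrict_space2)
  show "mmul m g \<in> space (restrict_space borel (Unitary m)) \<rightarrow> Unitary m"
    using g by (auto simp: space_restrict_space mmul_unitary)
  show "mmul m g \<in> borel_measurable (restrict_space borel (Unitary m))"
    by (rule measurable_restrict_space1, rule matrix_meas) (simp add: mmul_def)
qed

lemma mmul_mono:
  assumes mn: "m \<le> n" and g: "g \<in> Unitary m" and v: "v \<in> Unitary m"
  shows "mmul n g v = mmul m g v"
proof (intro ext)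
  fix i j
  show "mmul n g v i j = mmul m g v i j"
  proof (cases "i < m \<and> j < m")
    case True
    have sp: "{..<n} = {..<m} \<union> {m..<n}" using mn by auto
    have "(\<Sum>k<n. g i k * v k j) = (\<Sum>k<m. g i k * v k j) + (\<Sum>k\<in>{m..<n}. g i k * v k j)"
      unfolding sp by (subst sum.union_disjoint) auto
    also have "(\<Sum>k\<in>{m..<n}. g i k * v k j) = 0"
      using True g by (intro sum.neutral) (auto simp: UnitaryD_out idm_def)
    finally show ?thesis using True mn by (simp add: mmul_def)
  next
    case F0: False
    show ?thesis
    proof (cases "i < n \<and> j < n")
      case T2: True
      show ?thesis
      proof (cases "m \<le> i")
        case True
        have "(\<Sum>k<n. g i k * v k j) = (\<Sum>k<n. idm i k * v k j)"
          using True g by (intro sum.cong refl) (simp add: UnitaryD_out)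
        also have "\<dots> = v i j" using T2 by (simp add: sum_idm_left)
        finally show ?thesis using T2 True v by (simp add: mmul_def UnitaryD_out)
      next
        case F: False
        hence "m \<le> j" using F0 by auto
        hence "(\<Sum>k<n. g i k * v k j) = (\<Sum>k<n. g i k * idm k j)"
          using v by (intro sum.cong refl) (simp add: UnitaryD_out)
        also have "\<dots> = g i j" using T2 by (simp add: sum_idm_right)
        finally show ?thesis using T2 \<open>m \<le> j\<close> g by (simp add: mmul_def UnitaryD_out)
      qed
    next
      case F2: False
      thus ?thesis unfolding mmul_def using F0 by auto
    qed
  qed
qed

lemma mapply_mmul:
  assumes A: "A \<in> Unitary n"
  shows "mapply n (mmul n A B) x = mapply n A (mapply n B x)"
proof
  fix i
  show "mapply n (mmul n A B) x i = mapply n A (mapply n B x) i"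
  proof (cases "i < n")
    case True
    have "(\<Sum>j<n. mmul n A B i j * x j) = (\<Sum>j<n. \<Sum>k<n. A i k * (B k j * x j))"
      using True by (intro sum.cong refl) (simp add: mmul_def sum_distrib_right mult.assoc)
    also have "\<dots> = (\<Sum>k<n. \<Sum>j<n. A i k * (B k j * x j))" by (rule sum.swap)
    finally show ?thesis by (simp add: mapply_def sum_distrib_left)
  next
    case False
    thus ?thesis using A by (simp add: mapply_def mmul_def UnitaryD_out idm_def)
  qed
qed

lemma mapply_fix:
  assumes mn: "m \<le> n" and g: "g \<in> Unitary m" and y: "\<forall>j<m. y j = 0"
  shows "mapply n g y = mapply n idm y"
  unfolding mapply_def
proof (intro ext sum.cong refl)
  fix i j assume "j \<in> {..<n}"
  show "g i j * y j = idm i j * y j"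
  proof (cases "j < m")
    case True thus ?thesis using y by simp
  next
    case False thus ?thesis using g by (simp add: UnitaryD_out)
  qed
qed

lemma pi_nm_equiv:
  assumes mn: "m \<le> n" and g: "g \<in> Unitary m" and u: "u \<in> Unitary n"
  shows "pi_nm n m (mmul n g u) = mmul m g (pi_nm n m u)"
proof -
  define v where "v = pi_nm n m u"
  have v: "v \<in> Unitary m" "cond n m u v" using pi_nm_prop[OF mn u] by (auto simp: v_def)
  have gn: "g \<in> Unitary n" using Unitary_mono[OF mn g] .
  have vn: "v \<in> Unitary n" using Unitary_mono[OF mn v(1)] .
  have gu: "mmul n g u \<in> Unitary n" by (rule mmul_unitary[OF gn u])
  have gv: "mmul m g v \<in> Unitary m" by (rule mmul_unitary[OF g v(1)])
  have "cond n m (mmul n g u) (mmul m g v)"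
    unfolding cond_def mmul_mono[OF mn g v(1), symmetric]
  proof
    fix x
    obtain y where y: "\<forall>j<m. y j = 0" "mapply n (u - v) x = mapply n (u - idm) y"
      using v(2) unfolding cond_def by blast
    have "mapply n (mmul n g u - mmul n g v) x = mapply n (mmul n g u - idm) y"
    proof
      fix i
      have "mapply n (mmul n g u - mmul n g v) x i = mapply n g (mapply n u x) i - mapply n g (mapply n v x) i"
        by (simp add: mapply_diff mapply_mmul[OF gn])
      also have "\<dots> = mapply n g (mapply n (u - v) x) i"
        by (simp add: mapply_diff mapply_vdiff)
      also have "\<dots> = mapply n g (mapply n (u - idm) y) i" by (simp add: y(2))
      also have "\<dots> = mapply n g (mapply n u y) i - mapply n g (mapply n idm y) i"
        by (simp add: mapply_diff mapply_vdiff)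
      also have "mapply n g (mapply n idm y) = mapply n g y"
        by (rule mapply_cong) (simp add: mapply_idm)
      also have "mapply n g y = mapply n idm y" by (rule mapply_fix[OF mn g y(1)])
      also have "mapply n g (mapply n u y) i - mapply n idm y i = mapply n (mmul n g u - idm) y i"
        by (simp add: mapply_diff mapply_mmul[OF gn])
      finally show "mapply n (mmul n g u - mmul n g v) x i = mapply n (mmul n g u - idm) y i" .
    qed
    thus "\<exists>y. (\<forall>j<m. y j = 0) \<and> mapply n (mmul n g u - mmul n g v) x = mapply n (mmul n g u - idm) y"
      using y(1) by blast
  qed
  thus ?thesis unfolding v_def[symmetric] by (rule pi_nm_eq[OF mn gu gv])
qed

theorem proposition3p2:
  fixes n m :: nat and \<mu> :: "cmatrix measure"
  assumes "1 \<le> m" and "m \<le> n" and "is_haar n \<mu>"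
  shows "is_haar m (distr \<mu> (Un_borel m) (pi_nm n m))"
proof -
  have sets: "sets \<mu> = sets (Un_borel n)" and prob: "prob_space \<mu>"
    and inv: "\<And>g. g \<in> Unitary n \<Longrightarrow> distr \<mu> (Un_borel n) (mmul n g) = \<mu>"
    using assms(3) unfolding is_haar_def by auto
  obtain d where nd: "n = m + d" using assms(2) le_Suc_ex by blast
  have pmU: "pi_nm n m \<in> measurable (Un_borel n) (Un_borel m)" using pi_nm_meas nd by simp
  have pm: "pi_nm n m \<in> measurable \<mu> (Un_borel m)"
    using pmU measurable_cong_sets[OF sets refl, of "Un_borel m"] by simp
  have sp: "space \<mu> = Unitary n"
    using sets_eq_imp_space_eq[OF sets] by (simp add: Un_borel_def space_restrict_space)
  show ?thesis
    unfolding is_haar_def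
  proof (intro conjI ballI)
    show "sets (distr \<mu> (Un_borel m) (pi_nm n m)) = sets (Un_borel m)" by simp
    show "prob_space (distr \<mu> (Un_borel m) (pi_nm n m))"
      by (rule prob_space.prob_space_distr[OF prob pm])
  next
    fix g assume g: "g \<in> Unitary m"
    have gn: "g \<in> Unitary n" using Unitary_mono[OF assms(2) g] .
    have mgn: "mmul n g \<in> measurable \<mu> (Un_borel n)"
      using mmul_meas[OF gn] measurable_cong_sets[OF sets refl, of "Un_borel n"] by simp
    have "distr (distr \<mu> (Un_borel m) (pi_nm n m)) (Un_borel m) (mmul m g)
        = distr \<mu> (Un_borel m) (mmul m g \<circ> pi_nm n m)"
      by (rule distr_distr[OF mmul_meas[OF g] pm])
    also have "\<dots> = distr \<mu> (Un_borel m) (pi_nm n m \<circ> mmul n g)"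
      by (rule distr_cong) (auto simp: sp pi_nm_equiv[OF assms(2) g])
    also have "\<dots> = distr (distr \<mu> (Un_borel n) (mmul n g)) (Un_borel m) (pi_nm n m)"
      by (rule distr_distr[OF pmU mgn, symmetric])
    also have "\<dots> = distr \<mu> (Un_borel m) (pi_nm n m)" by (simp add: inv[OF gn])
    finally show "distr (distr \<mu> (Un_borel m) (pi_nm n m)) (Un_borel m) (mmul m g) = distr \<mu> (Un_borel m) (pi_nm n m)" .
  qed
qed

end
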